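(* Let $H$ be a graph whose complement $\overline{H}$ is a co-bipartite circular arc graph. Then $H^*$ is a comparability graph.
   Context: A circular arc graph is the intersection graph of a finite family of arcs of a circle; a graph is co-bipartite if its vertex set can be partitioned into two cliques. For a graph $H$, the graph $H^*$ has vertex set $E(H)$, and two edges $wx$ and $yz$ of $H$ are adjacent in $H^*$ iff $\{w,x,y,z\}$ induces a $2K_2$ (two disjoint edges and no other edges) in $H$; equivalently $H^*$ is the complement of the square of the line graph of $H$. A comparability graph is a graph whose edges can be transitively oriented, i.e. it is the comparability graph of some partial order on its vertex set. *)

theory Defs
  imports Complex_Main
begin

definition simple_graph :: "'a set \<Rightarrow> 'a set set \<Rightarrow> bool" where
  "simple_graph V E \<longleftrightarrow> finite V \<and> (\<forall>e\<in>E. e \<subseteq> V \<and> card e = 2)"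

definition complement_edges :: "'a set \<Rightarrow> 'a set set \<Rightarrow> 'a set set" where
  "complement_edges V E = {{u, v} | u v. u \<in> V \<and> v \<in> V \<and> u \<noteq> v \<and> {u, v} \<notin> E}"

definition is_clique :: "'a set set \<Rightarrow> 'a set \<Rightarrow> bool" where
  "is_clique E C \<longleftrightarrow> (\<forall>u\<in>C. \<forall>v\<in>C. u \<noteq> v \<longrightarrow> {u, v} \<in> E)"

definition co_bipartite :: "'a set \<Rightarrow> 'a set set \<Rightarrow> bool" where
  "co_bipartite V E \<longleftrightarrow>
     (\<exists>A B. A \<union> B = V \<and> A \<inter> B = {} \<and> is_clique E A \<and> is_clique E B)"

definition circle_arc :: "real \<Rightarrow> real \<Rightarrow> complex set" where
  "circle_arc a l = (\<lambda>t. cis t) ` {a .. a + l}"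

definition is_arc :: "complex set \<Rightarrow> bool" where
  "is_arc S \<longleftrightarrow> (\<exists>a l. 0 \<le> l \<and> l \<le> 2 * pi \<and> S = circle_arc a l)"

definition circular_arc_graph :: "'a set \<Rightarrow> 'a set set \<Rightarrow> bool" where
  "circular_arc_graph V E \<longleftrightarrow>
     (\<exists>f :: 'a \<Rightarrow> complex set. (\<forall>v\<in>V. is_arc (f v)) \<and>
        (\<forall>u\<in>V. \<forall>v\<in>V. u \<noteq> v \<longrightarrow> ({u, v} \<in> E \<longleftrightarrow> f u \<inter> f v \<noteq> {})))"

text \<open>Edges of H^*: vertex set is E(H); two edges are adjacent iff they induce a 2K2.\<close>
definition star_edges :: "'a set set \<Rightarrow> 'a set set set" where
  "star_edges E = {{e, f} | e f. e \<in> E \<and> f \<in> E \<and> e \<inter> f = {} \<and>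
                      (\<forall>u\<in>e. \<forall>v\<in>f. {u, v} \<notin> E)}"

definition comparability_graph :: "'a set \<Rightarrow> 'a set set \<Rightarrow> bool" where
  "comparability_graph V E \<longleftrightarrow>
     (\<exists>P. P \<subseteq> V \<times> V \<and> irrefl P \<and> trans P \<and>
        (\<forall>u\<in>V. \<forall>v\<in>V. u \<noteq> v \<longrightarrow> ({u, v} \<in> E \<longleftrightarrow> (u, v) \<in> P \<or> (v, u) \<in> P)))"

end

theory Submission
  imports Defs
begin


definition nrm :: "real \<Rightarrow> real" where
  "nrm z = z - 2*pi * of_int \<lfloor>z / (2*pi)\<rfloor>"

lemma nrm_bounds: "0 \<le> nrm z" "nrm z < 2*pi"
proof -
  have p: "2*pi > 0" by simp
  have "of_int \<lfloor>z / (2*pi)\<rfloor> \<le> z/(2*pi)" by (rule of_int_floor_le)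
  hence "2*pi * of_int \<lfloor>z / (2*pi)\<rfloor> \<le> 2*pi * (z/(2*pi))" using p by (intro mult_left_mono) auto
  thus "0 \<le> nrm z" unfolding nrm_def by simp
  have "z/(2*pi) < of_int \<lfloor>z / (2*pi)\<rfloor> + 1" by (rule real_of_int_floor_add_one_gt)
  hence "2*pi * (z/(2*pi)) < 2*pi * (of_int \<lfloor>z / (2*pi)\<rfloor> + 1)" using p by (intro mult_strict_left_mono) auto
  thus "nrm z < 2*pi" unfolding nrm_def by (simp add: algebra_simps)
qed

lemma nrm_shift: "nrm (z + 2*pi * of_int k) = nrm z"
proof -
  have "(z + 2*pi * of_int k) / (2*pi) = z/(2*pi) + of_int k" by (simp add: field_simps)
  hence "\<lfloor>(z + 2*pi * of_int k) / (2*pi)\<rfloor> = \<lfloor>z/(2*pi)\<rfloor> + k" by simp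
  thus ?thesis unfolding nrm_def by (simp add: algebra_simps)
qed

lemma nrm_id: assumes "0 \<le> z" "z < 2*pi" shows "nrm z = z"
proof -
  have "0 \<le> z/(2*pi)" "z/(2*pi) < 1" using assms by (auto simp: field_simps)
  hence "\<lfloor>z/(2*pi)\<rfloor> = 0" by (simp add: floor_eq_iff)
  thus ?thesis unfolding nrm_def by simp
qed

lemma nrm_neg: assumes "- 2*pi \<le> z" "z < 0" shows "nrm z = z + 2*pi"
proof -
  have "nrm z = nrm (z + 2*pi * of_int 1)" by (rule nrm_shift[symmetric])
  also have "\<dots> = z + 2*pi * of_int 1" using assms by (intro nrm_id) auto
  finally show ?thesis by simp
qed

lemma nrm_decomp: "\<exists>k::int. z = nrm z + 2*pi*of_int k"
  unfolding nrm_def by auto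

lemma nrm_nrm_minus: "nrm (nrm y - d) = nrm (y - d)"
proof -
  obtain k where k: "y = nrm y + 2*pi*of_int k" using nrm_decomp by blast
  have "nrm (y - d) = nrm ((nrm y - d) + 2*pi*of_int k)" using k by (metis add.commute add_diff_eq)
  thus ?thesis by (simp add: nrm_shift)
qed

lemma cis_period: "cis (t + 2*pi*of_int k) = cis t"
proof -
  have "cis (2*pi*of_int k) = 1" by (rule cis_multiple_2pi) simp
  thus ?thesis by (simp add: cis_mult[symmetric])
qed

lemma cis_eq_imp: assumes "cis a = cis b" shows "\<exists>n::int. a - b = of_int n * (2*pi)"
proof -
  have "cis (a - b) = 1" using assms by (simp add: cis_divide[symmetric])
  hence "Re (cis (a - b)) = 1" by simp
  hence "cos (a - b) = 1" by simp
  then obtain n::int where "a - b = of_int n * 2 * pi" using cos_one_2pi_int by blast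
  thus ?thesis by (auto simp: algebra_simps)
qed

lemma arc_shift: "circle_arc a l = cis ` {p + nrm (a - p) .. p + nrm (a - p) + l}"
proof -
  obtain k where k: "a - p = nrm (a - p) + 2*pi*of_int k" using nrm_decomp by blast
  define c where "c = 2*pi*of_int k"
  have a: "a = p + nrm (a - p) + c" using k c_def by simp
  show ?thesis unfolding circle_arc_def
  proof (intro set_eqI iffI)
    fix z assume "z \<in> cis ` {a..a+l}"
    then obtain t where t: "t \<in> {a..a+l}" "z = cis t" by blast
    have "cis t = cis (t - c + 2*pi*of_int k)" using c_def by simp
    also have "\<dots> = cis (t - c)" by (rule cis_period)
    finally have "z = cis (t - c)" using t by simp
    moreover have "t - c \<in> {p + nrm (a - p) .. p + nrm (a - p) + l}" using t a by auto
    ultimately show "z \<in> cis ` {p + nrm (a - p) .. p + nrm (a - p) + l}" by blast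
  next
    fix z assume "z \<in> cis ` {p + nrm (a - p) .. p + nrm (a - p) + l}"
    then obtain t where t: "t \<in> {p + nrm (a - p) .. p + nrm (a - p) + l}" "z = cis t" by blast
    have "z = cis (t + c)" using t c_def cis_period by simp
    moreover have "t + c \<in> {a..a+l}" using t a by auto
    ultimately show "z \<in> cis ` {a..a+l}" by blast
  qed
qed

definition meet :: "real \<Rightarrow> real \<Rightarrow> real \<Rightarrow> real \<Rightarrow> real \<Rightarrow> bool" where
 "meet T x1 l1 x2 l2 \<longleftrightarrow> (x1 \<le> x2 \<and> x2 \<le> x1+l1) \<or> x2+T \<le> x1+l1 \<or> (x2 \<le> x1 \<and> x1 \<le> x2+l2) \<or> x1+T \<le> x2+l2"

lemma meet_iff:
  assumes "0 \<le> x1" "x1 < 2*pi" "0 \<le> x2" "x2 < 2*pi" "0 \<le> l1" "l1 \<le> 2*pi" "0 \<le> l2" "l2 \<le> 2*pi"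
  shows "(cis ` {p+x1..p+x1+l1} \<inter> cis ` {p+x2..p+x2+l2} \<noteq> {}) \<longleftrightarrow> meet (2*pi) x1 l1 x2 l2"
proof
  assume "cis ` {p+x1..p+x1+l1} \<inter> cis ` {p+x2..p+x2+l2} \<noteq> {}"
  then obtain t1 t2 where t: "t1 \<in> {p+x1..p+x1+l1}" "t2 \<in> {p+x2..p+x2+l2}" "cis t1 = cis t2" by blast
  then obtain n::int where n: "t1 - t2 = of_int n * (2*pi)" using cis_eq_imp by blast
  have pi: "pi > 0" by simp
  have e1: "(of_int n - 2) * (2*pi) = (t1 - t2) - 4*pi" using n by (simp add: algebra_simps)
  have "t1 - t2 < 4*pi" using t assms by auto
  hence "(of_int n - 2) * (2*pi) < 0" using e1 by linarith
  hence "of_int n - 2 < (0::real)" using pi by (simp add: mult_less_0_iff)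
  hence n1: "n \<le> 1" by simp
  have e2: "(of_int n + 2) * (2*pi) = (t1 - t2) + 4*pi" using n by (simp add: algebra_simps)
  have "t1 - t2 > - 4*pi" using t assms by auto
  hence "(of_int n + 2) * (2*pi) > 0" using e2 by linarith
  hence "of_int n + 2 > (0::real)" using pi by (simp add: zero_less_mult_iff)
  hence n2: "n \<ge> -1" by simp
  have "n = -1 \<or> n = 0 \<or> n = 1" using n1 n2 by linarith
  thus "meet (2*pi) x1 l1 x2 l2"
    using t n assms unfolding meet_def by auto
next
  assume m: "meet (2*pi) x1 l1 x2 l2"
  show "cis ` {p+x1..p+x1+l1} \<inter> cis ` {p+x2..p+x2+l2} \<noteq> {}"
    using m unfolding meet_def
  proof (elim disjE conjE)
    assume "x1 \<le> x2" "x2 \<le> x1 + l1"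
    hence "cis (p+x2) \<in> cis ` {p+x1..p+x1+l1} \<inter> cis ` {p+x2..p+x2+l2}" using assms by auto
    thus ?thesis by blast
  next
    assume h: "x2 + 2*pi \<le> x1 + l1"
    have "cis (p + x2 + 2*pi*of_int 1) = cis (p+x2)" by (rule cis_period)
    moreover have "p + x2 + 2*pi*of_int 1 \<in> {p+x1..p+x1+l1}" using h assms by auto
    ultimately have "cis (p+x2) \<in> cis ` {p+x1..p+x1+l1} \<inter> cis ` {p+x2..p+x2+l2}" using assms
      by (metis (no_types, lifting) IntI atLeastAtMost_iff image_eqI add_increasing2 order_refl add.commute)
    thus ?thesis by blast
  next
    assume "x2 \<le> x1" "x1 \<le> x2 + l2"
    hence "cis (p+x1) \<in> cis ` {p+x1..p+x1+l1} \<inter> cis ` {p+x2..p+x2+l2}" using assms by auto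
    thus ?thesis by blast
  next
    assume h: "x1 + 2*pi \<le> x2 + l2"
    have "cis (p + x1 + 2*pi*of_int 1) = cis (p+x1)" by (rule cis_period)
    moreover have "p + x1 + 2*pi*of_int 1 \<in> {p+x2..p+x2+l2}" using h assms by auto
    ultimately have "cis (p+x1) \<in> cis ` {p+x1..p+x1+l1} \<inter> cis ` {p+x2..p+x2+l2}" using assms
      by (metis (no_types, lifting) IntI atLeastAtMost_iff image_eqI add_increasing2 order_refl add.commute)
    thus ?thesis by blast
  qed
qed


definition kend :: "real \<Rightarrow> real \<Rightarrow> real \<Rightarrow> real" where
 "kend T x l = (if x + l < T then x + l else x + l - T)"

definition ok :: "real \<Rightarrow> real \<Rightarrow> real \<Rightarrow> bool" where
 "ok T x l \<longleftrightarrow> 0 \<le> x \<and> x < T \<and> 0 \<le> l \<and> l \<le> T"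

lemma tot:
  assumes "ok T xa la" "ok T xb lb" "ok T xa' la'" "ok T xb' lb'"
   "meet T xa la xa' la'" "meet T xb lb xb' lb'"
   "\<not> meet T xa la xb lb" "\<not> meet T xa' la' xb' lb'"
   "meet T xa la xb' lb'" "meet T xa' la' xb lb"
  shows "kend T xa la \<noteq> kend T xa' la'"
  using assms unfolding meet_def kend_def ok_def by (smt (verit))

lemma crux:
  assumes "ok T x0 l0" "ok T y0 m0" "ok T x1 l1" "ok T y1 m1" "ok T x2 l2" "ok T y2 m2" "ok T x3 l3" "ok T y3 m3"
   "meet T x0 l0 x1 l1" "meet T x0 l0 x2 l2" "meet T x0 l0 x3 l3" "meet T x1 l1 x2 l2" "meet T x1 l1 x3 l3" "meet T x2 l2 x3 l3"
   "meet T y0 m0 y1 m1" "meet T y0 m0 y2 m2" "meet T y0 m0 y3 m3" "meet T y1 m1 y2 m2" "meet T y1 m1 y3 m3" "meet T y2 m2 y3 m3"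
   "\<not> meet T x1 l1 y1 m1" "\<not> meet T x2 l2 y2 m2" "\<not> meet T x3 l3 y3 m3"
   "meet T x1 l1 y2 m2" "meet T x2 l2 y1 m1" "meet T x2 l2 y3 m3" "meet T x3 l3 y2 m2"
   "0 < x0" "x0 + l0 < y0" "y0 + m0 < T"
   "kend T x1 l1 < kend T x2 l2" "kend T x2 l2 < kend T x3 l3"
  shows "meet T x1 l1 y3 m3 \<and> meet T x3 l3 y1 m1"
  using assms unfolding meet_def kend_def ok_def by (smt (verit))



lemma star_mem: "{e,e'} \<in> star_edges E \<longleftrightarrow> e \<in> E \<and> e' \<in> E \<and> e \<inter> e' = {} \<and> (\<forall>u\<in>e. \<forall>v\<in>e'. {u,v} \<notin> E)"
proof
  assume "{e,e'} \<in> star_edges E"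
  hence "\<exists>x y. {e,e'} = {x,y} \<and> x \<in> E \<and> y \<in> E \<and> x \<inter> y = {} \<and> (\<forall>u\<in>x. \<forall>v\<in>y. {u,v} \<notin> E)"
    unfolding star_edges_def mem_Collect_eq .
  then obtain x y where xy: "{e,e'} = {x,y}" "x \<in> E" "y \<in> E" "x \<inter> y = {}" "\<forall>u\<in>x. \<forall>v\<in>y. {u,v} \<notin> E"
    by iprover
  from xy(1) have "(e = x \<and> e' = y) \<or> (e = y \<and> e' = x)" by (simp add: doubleton_eq_iff)
  thus "e \<in> E \<and> e' \<in> E \<and> e \<inter> e' = {} \<and> (\<forall>u\<in>e. \<forall>v\<in>e'. {u,v} \<notin> E)"
  proof
    assume "e = x \<and> e' = y" thus ?thesis using xy by simp
  next
    assume h: "e = y \<and> e' = x"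
    have "\<forall>u\<in>e. \<forall>v\<in>e'. {u,v} \<notin> E"
    proof (intro ballI)
      fix u v assume "u \<in> e" "v \<in> e'"
      hence "{v,u} \<notin> E" using xy(5) h by blast
      thus "{u,v} \<notin> E" by (simp add: insert_commute)
    qed
    moreover have "e \<inter> e' = {}" using xy(4) h by blast
    ultimately show ?thesis using xy h by simp
  qed
next
  assume "e \<in> E \<and> e' \<in> E \<and> e \<inter> e' = {} \<and> (\<forall>u\<in>e. \<forall>v\<in>e'. {u,v} \<notin> E)"
  thus "{e,e'} \<in> star_edges E" unfolding star_edges_def by blast
qed

theorem lemma4:
  fixes V :: "'a set" and E :: "'a set set"
  assumes "simple_graph V E"
    and "co_bipartite V (complement_edges V E)"
    and "circular_arc_graph V (complement_edges V E)"
  shows "comparability_graph E (star_edges E)"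
proof -
  define C where "C = complement_edges V E"
  obtain A B where AB: "A \<union> B = V" "A \<inter> B = {}" "is_clique C A" "is_clique C B"
    using assms(2) unfolding co_bipartite_def C_def by blast
  obtain f :: "'a \<Rightarrow> complex set" where f1: "\<forall>v\<in>V. is_arc (f v)"
    and f2: "\<forall>u\<in>V. \<forall>v\<in>V. u \<noteq> v \<longrightarrow> ({u, v} \<in> C \<longleftrightarrow> f u \<inter> f v \<noteq> {})"
    using assms(3) unfolding circular_arc_graph_def C_def by blast
  have "\<forall>v\<in>V. \<exists>q. 0 \<le> snd q \<and> snd q \<le> 2*pi \<and> f v = circle_arc (fst q) (snd q)"
    using f1 unfolding is_arc_def by force
  then obtain g where g: "\<forall>v\<in>V. 0 \<le> snd (g v) \<and> snd (g v) \<le> 2*pi \<and> f v = circle_arc (fst (g v)) (snd (g v))"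
    by metis
  define al where "al v = fst (g v)" for v
  define ln where "ln v = snd (g v)" for v
  have ln: "\<And>v. v \<in> V \<Longrightarrow> 0 \<le> ln v \<and> ln v \<le> 2*pi" using g ln_def by auto
  have fv: "\<And>v. v \<in> V \<Longrightarrow> f v = circle_arc (al v) (ln v)" using g ln_def al_def by auto
  have compl: "\<And>u v. u \<in> V \<Longrightarrow> v \<in> V \<Longrightarrow> u \<noteq> v \<Longrightarrow> ({u,v} \<in> C \<longleftrightarrow> {u,v} \<notin> E)"
    unfolding C_def complement_edges_def by auto
  have geo: "\<And>p u v. u \<in> V \<Longrightarrow> v \<in> V \<Longrightarrow>
      (f u \<inter> f v \<noteq> {} \<longleftrightarrow> meet (2*pi) (nrm (al u - p)) (ln u) (nrm (al v - p)) (ln v))"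
  proof -
    fix p u v assume uv: "u \<in> V" "v \<in> V"
    show "(f u \<inter> f v \<noteq> {} \<longleftrightarrow> meet (2*pi) (nrm (al u - p)) (ln u) (nrm (al v - p)) (ln v))"
      unfolding fv[OF uv(1)] fv[OF uv(2)] arc_shift[where p=p]
      using meet_iff[of "nrm (al u - p)" "nrm (al v - p)" "ln u" "ln v" p] ln[OF uv(1)] ln[OF uv(2)]
        nrm_bounds by (simp add: add.assoc)
  qed
  have Ecase: "\<And>e. e \<in> E \<Longrightarrow> \<exists>a b. a \<in> A \<and> b \<in> B \<and> e = {a,b}"
  proof -
    fix e assume e: "e \<in> E"
    hence "e \<subseteq> V" "card e = 2" using assms(1) unfolding simple_graph_def by auto
    then obtain u v where uv: "e = {u,v}" "u \<noteq> v" "u \<in> V" "v \<in> V" by (auto simp: card_2_iff)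
    have nA: "\<not> (u \<in> A \<and> v \<in> A)"
    proof
      assume "u \<in> A \<and> v \<in> A"
      hence "{u,v} \<in> C" using AB(3) uv(2) unfolding is_clique_def by auto
      thus False using compl uv e by auto
    qed
    have nB: "\<not> (u \<in> B \<and> v \<in> B)"
    proof
      assume "u \<in> B \<and> v \<in> B"
      hence "{u,v} \<in> C" using AB(4) uv(2) unfolding is_clique_def by auto
      thus False using compl uv e by auto
    qed
    show "\<exists>a b. a \<in> A \<and> b \<in> B \<and> e = {a,b}"
      using nA nB uv AB(1) by (auto simp: insert_commute)
  qed
  show ?thesis
  proof (cases "E = {}")
    case True
    show ?thesis unfolding comparability_graph_def
      by (rule exI[of _ "{}"]) (auto simp: True irrefl_def trans_def)
  next
    case False
    then obtain e0 where e0: "e0 \<in> E" by blast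
    then obtain a0 b0 where ab0: "a0 \<in> A" "b0 \<in> B" "e0 = {a0,b0}" using Ecase by blast
    have a0V: "a0 \<in> V" and b0V: "b0 \<in> V" using ab0 AB(1) by auto
    have a0b0: "a0 \<noteq> b0" using ab0 AB(2) by auto
    have disj0: "\<not> (f a0 \<inter> f b0 \<noteq> {})"
      using f2 compl a0V b0V a0b0 e0 ab0(3) by auto
    define p0 where "p0 = al a0"
    define x0 where "x0 = nrm (al b0 - p0)"
    have xa0: "nrm (al a0 - p0) = 0" unfolding p0_def by (simp add: nrm_id)
    have nm0: "\<not> meet (2*pi) 0 (ln a0) x0 (ln b0)"
      using disj0 geo[OF a0V b0V, of p0] xa0 x0_def by simp
    have x0b: "0 \<le> x0" "x0 < 2*pi" using nrm_bounds x0_def by auto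
    have lb: "0 \<le> ln a0" "ln a0 \<le> 2*pi" "0 \<le> ln b0" "ln b0 \<le> 2*pi" using ln a0V b0V by auto
    have c1: "ln a0 < x0" "x0 + ln b0 < 2*pi" using nm0 x0b lb unfolding meet_def by auto
    define \<delta> where "\<delta> = (x0 + ln b0 + 2*pi) / 2"
    define p where "p = p0 + \<delta>"
    define xs where "xs v = nrm (al v - p)" for v
    have xs_alt: "\<And>v. xs v = nrm (nrm (al v - p0) - \<delta>)"
      unfolding xs_def nrm_nrm_minus p_def by (simp add: algebra_simps)
    have d1a: "- 2*pi \<le> 0 - \<delta>" using c1 x0b lb unfolding \<delta>_def by (simp add: field_simps)
    have d1b: "0 - \<delta> < 0" using c1 x0b lb unfolding \<delta>_def by (simp add: field_simps)
    note d1 = d1a d1b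
    have xsa0: "xs a0 = 0 - \<delta> + 2*pi"
      using xs_alt[of a0] xa0 nrm_neg[OF d1] by simp
    have d2a: "- 2*pi \<le> x0 - \<delta>" using c1 x0b lb unfolding \<delta>_def by (simp add: field_simps)
    have d2b: "x0 - \<delta> < 0" using c1 x0b lb unfolding \<delta>_def by (simp add: field_simps)
    note d2 = d2a d2b
    have xsb0: "xs b0 = x0 - \<delta> + 2*pi"
      using xs_alt[of b0] x0_def nrm_neg[OF d2] by simp
    have E0: "0 < xs a0" "xs a0 + ln a0 < xs b0" "xs b0 + ln b0 < 2*pi"
      using xsa0 xsb0 c1 x0b lb unfolding \<delta>_def by (auto simp: field_simps)
    define M where "M u v = meet (2*pi) (xs u) (ln u) (xs v) (ln v)" for u v
    have Mgeo: "\<And>u v. u \<in> V \<Longrightarrow> v \<in> V \<Longrightarrow> (f u \<inter> f v \<noteq> {} \<longleftrightarrow> M u v)"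
    proof -
      fix u v assume uv: "u \<in> V" "v \<in> V"
      show "(f u \<inter> f v \<noteq> {} \<longleftrightarrow> M u v)" unfolding M_def xs_def by (rule geo[OF uv])
    qed
    have H1: "\<And>u v. u \<in> V \<Longrightarrow> v \<in> V \<Longrightarrow> u \<noteq> v \<Longrightarrow> ({u,v} \<in> E \<longleftrightarrow> \<not> M u v)"
    proof -
      fix u v assume uv: "u \<in> V" "v \<in> V" "u \<noteq> v"
      have 1: "{u,v} \<in> C \<longleftrightarrow> f u \<inter> f v \<noteq> {}" using f2 uv by simp
      show "({u,v} \<in> E \<longleftrightarrow> \<not> M u v)" using 1 compl[OF uv] Mgeo[OF uv(1,2)] by auto
    qed
    have okv: "\<And>v. v \<in> V \<Longrightarrow> ok (2*pi) (xs v) (ln v)"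
      unfolding ok_def xs_def using nrm_bounds ln by auto
    have Msym: "\<And>u v. M u v \<longleftrightarrow> M v u" unfolding M_def meet_def by auto
    have Mrefl: "\<And>v. v \<in> V \<Longrightarrow> M v v" unfolding M_def meet_def using ln by auto
    have HA: "\<And>u v. u \<in> A \<Longrightarrow> v \<in> A \<Longrightarrow> M u v"
    proof -
      fix u v assume uv: "u \<in> A" "v \<in> A"
      hence V: "u \<in> V" "v \<in> V" using AB(1) by auto
      show "M u v"
      proof (cases "u = v")
        case True thus ?thesis using Mrefl V by simp
      next
        case False
        hence "{u,v} \<in> C" using AB(3) uv unfolding is_clique_def by auto
        thus ?thesis using f2 Mgeo V False by blast
      qed
    qed
    have HB: "\<And>u v. u \<in> B \<Longrightarrow> v \<in> B \<Longrightarrow> M u v"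
    proof -
      fix u v assume uv: "u \<in> B" "v \<in> B"
      hence V: "u \<in> V" "v \<in> V" using AB(1) by auto
      show "M u v"
      proof (cases "u = v")
        case True thus ?thesis using Mrefl V by simp
      next
        case False
        hence "{u,v} \<in> C" using AB(4) uv unfolding is_clique_def by auto
        thus ?thesis using f2 Mgeo V False by blast
      qed
    qed
    define ea where "ea e = (SOME a. a \<in> e \<and> a \<in> A)" for e :: "'a set"
    define eb where "eb e = (SOME b. b \<in> e \<and> b \<in> B)" for e :: "'a set"
    have H4: "\<And>e. e \<in> E \<Longrightarrow> ea e \<in> A \<and> eb e \<in> B \<and> ea e \<in> e \<and> eb e \<in> e \<and> (\<forall>x\<in>e. x = ea e \<or> x = eb e)"
    proof -
      fix e assume e: "e \<in> E"
      then obtain a b where ab: "a \<in> A" "b \<in> B" "e = {a,b}" using Ecase by blast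
      have "ea e = a" unfolding ea_def
        by (rule some_equality) (use ab AB(2) in auto)
      moreover have "eb e = b" unfolding eb_def
        by (rule some_equality) (use ab AB(2) in auto)
      ultimately show "ea e \<in> A \<and> eb e \<in> B \<and> ea e \<in> e \<and> eb e \<in> e \<and> (\<forall>x\<in>e. x = ea e \<or> x = eb e)" using ab by simp
    qed
    have hA: "\<And>e. e \<in> E \<Longrightarrow> ea e \<in> A" using H4[THEN conjunct1] .
    have hB: "\<And>e. e \<in> E \<Longrightarrow> eb e \<in> B" using H4[THEN conjunct2, THEN conjunct1] .
    have hmA: "\<And>e. e \<in> E \<Longrightarrow> ea e \<in> e" using H4[THEN conjunct2, THEN conjunct2, THEN conjunct1] .
    have hmB: "\<And>e. e \<in> E \<Longrightarrow> eb e \<in> e" using H4[THEN conjunct2, THEN conjunct2, THEN conjunct2, THEN conjunct1] .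
    have hall: "\<And>e x. e \<in> E \<Longrightarrow> x \<in> e \<Longrightarrow> x = ea e \<or> x = eb e"
      using H4[THEN conjunct2, THEN conjunct2, THEN conjunct2, THEN conjunct2] by blast
    have AV: "\<And>v. v \<in> A \<Longrightarrow> v \<in> V" and BV: "\<And>v. v \<in> B \<Longrightarrow> v \<in> V" using AB(1) by auto
    have AneB: "\<And>u v. u \<in> A \<Longrightarrow> v \<in> B \<Longrightarrow> u \<noteq> v" using AB(2) by auto
    have H4': "\<And>e. e \<in> E \<Longrightarrow> \<not> M (ea e) (eb e)"
    proof -
      fix e assume e: "e \<in> E"
      note h = hA[OF e] hB[OF e] hmA[OF e] hmB[OF e]
      have d: "ea e \<noteq> eb e" using h AneB by blast
      have eq: "{ea e, eb e} = e"
      proof (intro set_eqI iffI)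
        fix x assume "x \<in> {ea e, eb e}"
        hence "x = ea e \<or> x = eb e" by simp
        thus "x \<in> e" using h by (elim disjE) simp_all
      next
        fix x assume "x \<in> e"
        hence "x = ea e \<or> x = eb e" by (rule hall[OF e])
        thus "x \<in> {ea e, eb e}" by simp
      qed
      have mem: "{ea e, eb e} \<in> E" by (subst eq) (rule e)
      have V: "ea e \<in> V" "eb e \<in> V" using h AV BV by blast+
      show "\<not> M (ea e) (eb e)" using H1[OF V d] mem by blast
    qed
    have star_iff: "\<And>e e'. e \<in> E \<Longrightarrow> e' \<in> E \<Longrightarrow>
        ({e,e'} \<in> star_edges E \<longleftrightarrow> M (ea e) (eb e') \<and> M (ea e') (eb e))"
    proof -
      fix e e' assume e: "e \<in> E" and e': "e' \<in> E"
      note h = hA[OF e] hB[OF e] hmA[OF e] hmB[OF e]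
      note h' = hA[OF e'] hB[OF e'] hmA[OF e'] hmB[OF e']
      show "({e,e'} \<in> star_edges E \<longleftrightarrow> M (ea e) (eb e') \<and> M (ea e') (eb e))"
      proof
        assume st: "{e,e'} \<in> star_edges E"
        have s: "\<forall>u\<in>e. \<forall>v\<in>e'. {u,v} \<notin> E" using star_mem[of e e' E] st by simp
        have n1: "{ea e, eb e'} \<notin> E" using s hmA[OF e] hmB[OF e'] by simp
        have n2: "{eb e, ea e'} \<notin> E" using s hmB[OF e] hmA[OF e'] by simp
        have d1: "ea e \<noteq> eb e'" by (rule AneB[OF hA[OF e] hB[OF e']])
        have d2: "eb e \<noteq> ea e'" using AneB[OF hA[OF e'] hB[OF e]] by simp
        have V: "ea e \<in> V" "eb e' \<in> V" "eb e \<in> V" "ea e' \<in> V"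
          using AV[OF hA[OF e]] BV[OF hB[OF e']] BV[OF hB[OF e]] AV[OF hA[OF e']] by simp_all
        have 1: "M (ea e) (eb e')" using H1[OF V(1) V(2) d1] n1 by simp
        have 2: "M (eb e) (ea e')" using H1[OF V(3) V(4) d2] n2 by simp
        show "M (ea e) (eb e') \<and> M (ea e') (eb e)" using 1 2 Msym[of "eb e" "ea e'"] by simp
      next
        assume m: "M (ea e) (eb e') \<and> M (ea e') (eb e)"
        have ne1: "ea e \<noteq> ea e'"
        proof
          assume "ea e = ea e'" thus False using m H4'[OF e] by simp
        qed
        have ne2: "eb e \<noteq> eb e'"
        proof
          assume "eb e = eb e'" thus False using m H4'[OF e'] by simp
        qed
        have all: "\<And>u v. u \<in> e \<Longrightarrow> v \<in> e' \<Longrightarrow> u \<noteq> v \<and> M u v"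
        proof -
          fix u v assume uv: "u \<in> e" "v \<in> e'"
          have uu: "u = ea e \<or> u = eb e" by (rule hall[OF e uv(1)])
          have vv: "v = ea e' \<or> v = eb e'" by (rule hall[OF e' uv(2)])
          show "u \<noteq> v \<and> M u v"
          proof (rule disjE[OF uu]; rule disjE[OF vv])
            assume "u = ea e" "v = ea e'" thus ?thesis using ne1 HA[OF hA[OF e] hA[OF e']] by simp
          next
            assume "u = ea e" "v = eb e'" thus ?thesis using m AneB[OF hA[OF e] hB[OF e']] by simp
          next
            assume "u = eb e" "v = ea e'" thus ?thesis
              using m AneB[OF hA[OF e'] hB[OF e]] Msym[of "eb e" "ea e'"] by auto
          next
            assume "u = eb e" "v = eb e'" thus ?thesis using ne2 HB[OF hB[OF e] hB[OF e']] by simp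
          qed
        qed
        have dj: "e \<inter> e' = {}"
        proof (rule equals0I)
          fix x assume "x \<in> e \<inter> e'"
          hence "x \<in> e" "x \<in> e'" by simp_all
          thus False using all by blast
        qed
        have ne: "\<forall>u\<in>e. \<forall>v\<in>e'. {u,v} \<notin> E"
        proof (intro ballI)
          fix u v assume uv: "u \<in> e" "v \<in> e'"
          have uu: "u = ea e \<or> u = eb e" by (rule hall[OF e uv(1)])
          have vv: "v = ea e' \<or> v = eb e'" by (rule hall[OF e' uv(2)])
          have uV: "u \<in> V" using uu AV[OF hA[OF e]] BV[OF hB[OF e]] by (elim disjE) simp_all
          have vV: "v \<in> V" using vv AV[OF hA[OF e']] BV[OF hB[OF e']] by (elim disjE) simp_all
          show "{u,v} \<notin> E" using all[OF uv] H1[OF uV vV] by simp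
        qed
        show "{e,e'} \<in> star_edges E" using star_mem[of e e' E] e e' dj ne by simp
      qed
    qed
    define key where "key e = kend (2*pi) (xs (ea e)) (ln (ea e))" for e
    define P where "P = {(e,e'). e \<in> E \<and> e' \<in> E \<and> M (ea e) (eb e') \<and> M (ea e') (eb e) \<and> key e < key e'}"
    have "P \<subseteq> E \<times> E" unfolding P_def by auto
    moreover have "irrefl P" unfolding P_def irrefl_def by auto
    moreover have "trans P"
    proof (rule transI)
      fix e f' g' assume 1: "(e, f') \<in> P" and 2: "(f', g') \<in> P"
      have E: "e \<in> E" "f' \<in> E" "g' \<in> E" using 1 2 unfolding P_def by auto
      note h1 = hA[OF E(1)] hB[OF E(1)] and h2 = hA[OF E(2)] hB[OF E(2)] and h3 = hA[OF E(3)] hB[OF E(3)]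
      have k: "key e < key f'" "key f' < key g'" using 1 2 unfolding P_def by auto
      have m: "M (ea e) (eb f')" "M (ea f') (eb e)" "M (ea f') (eb g')" "M (ea g') (eb f')"
        using 1 2 unfolding P_def by auto
      define a1 where "a1 = ea e"
      define a2 where "a2 = ea f'"
      define a3 where "a3 = ea g'"
      define b1 where "b1 = eb e"
      define b2 where "b2 = eb f'"
      define b3 where "b3 = eb g'"
      have inA: "a1 \<in> A" "a2 \<in> A" "a3 \<in> A" unfolding a1_def a2_def a3_def using h1 h2 h3 by simp_all
      have inB: "b1 \<in> B" "b2 \<in> B" "b3 \<in> B" unfolding b1_def b2_def b3_def using h1 h2 h3 by simp_all
      have o: "ok (2*pi) (xs a0) (ln a0)" "ok (2*pi) (xs b0) (ln b0)"
        "ok (2*pi) (xs a1) (ln a1)" "ok (2*pi) (xs b1) (ln b1)"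
        "ok (2*pi) (xs a2) (ln a2)" "ok (2*pi) (xs b2) (ln b2)"
        "ok (2*pi) (xs a3) (ln a3)" "ok (2*pi) (xs b3) (ln b3)"
        using okv[OF AV[OF ab0(1)]] okv[OF BV[OF ab0(2)]] okv[OF AV[OF inA(1)]] okv[OF BV[OF inB(1)]]
          okv[OF AV[OF inA(2)]] okv[OF BV[OF inB(2)]] okv[OF AV[OF inA(3)]] okv[OF BV[OF inB(3)]] by simp_all
      have mA: "M a0 a1" "M a0 a2" "M a0 a3" "M a1 a2" "M a1 a3" "M a2 a3"
        using HA[OF ab0(1) inA(1)] HA[OF ab0(1) inA(2)] HA[OF ab0(1) inA(3)] HA[OF inA(1) inA(2)]
          HA[OF inA(1) inA(3)] HA[OF inA(2) inA(3)] by simp_all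
      have mB: "M b0 b1" "M b0 b2" "M b0 b3" "M b1 b2" "M b1 b3" "M b2 b3"
        using HB[OF ab0(2) inB(1)] HB[OF ab0(2) inB(2)] HB[OF ab0(2) inB(3)] HB[OF inB(1) inB(2)]
          HB[OF inB(1) inB(3)] HB[OF inB(2) inB(3)] by simp_all
      have nm: "\<not> M a1 b1" "\<not> M a2 b2" "\<not> M a3 b3"
        unfolding a1_def a2_def a3_def b1_def b2_def b3_def using H4'[OF E(1)] H4'[OF E(2)] H4'[OF E(3)] by simp_all
      have mm: "M a1 b2" "M a2 b1" "M a2 b3" "M a3 b2"
        unfolding a1_def a2_def a3_def b1_def b2_def b3_def using m by simp_all
      have kk: "kend (2*pi) (xs a1) (ln a1) < kend (2*pi) (xs a2) (ln a2)"
        "kend (2*pi) (xs a2) (ln a2) < kend (2*pi) (xs a3) (ln a3)"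
        using k unfolding key_def a1_def a2_def a3_def by simp_all
      have "meet (2*pi) (xs a1) (ln a1) (xs b3) (ln b3) \<and>
            meet (2*pi) (xs a3) (ln a3) (xs b1) (ln b1)"
        by (rule crux[OF o mA[unfolded M_def] mB[unfolded M_def] nm[unfolded M_def] mm[unfolded M_def] E0 kk])
      hence "meet (2*pi) (xs (ea e)) (ln (ea e)) (xs (eb g')) (ln (eb g')) \<and>
            meet (2*pi) (xs (ea g')) (ln (ea g')) (xs (eb e)) (ln (eb e))"
        unfolding a1_def a3_def b1_def b3_def .
      thus "(e, g') \<in> P" using E k unfolding P_def M_def by auto
    qed
    moreover have "\<forall>u\<in>E. \<forall>v\<in>E. u \<noteq> v \<longrightarrow> ({u, v} \<in> star_edges E \<longleftrightarrow> (u, v) \<in> P \<or> (v, u) \<in> P)"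
    proof (intro ballI impI)
      fix u v assume u: "u \<in> E" and v: "v \<in> E" and "u \<noteq> v"
      note hu = hA[OF u] hB[OF u] and hv = hA[OF v] hB[OF v]
      show "{u, v} \<in> star_edges E \<longleftrightarrow> (u, v) \<in> P \<or> (v, u) \<in> P"
      proof
        assume s: "{u, v} \<in> star_edges E"
        hence m: "M (ea u) (eb v)" "M (ea v) (eb u)" using star_iff u v by auto
        have o: "ok (2*pi) (xs (ea u)) (ln (ea u))" "ok (2*pi) (xs (eb u)) (ln (eb u))"
          "ok (2*pi) (xs (ea v)) (ln (ea v))" "ok (2*pi) (xs (eb v)) (ln (eb v))"
          using okv[OF AV[OF hA[OF u]]] okv[OF BV[OF hB[OF u]]] okv[OF AV[OF hA[OF v]]] okv[OF BV[OF hB[OF v]]] by simp_all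
        have mm: "M (ea u) (ea v)" "M (eb u) (eb v)" using HA[OF hA[OF u] hA[OF v]] HB[OF hB[OF u] hB[OF v]] by simp_all
        have "key u \<noteq> key v" unfolding key_def
          by (rule tot[OF o mm[unfolded M_def] H4'[OF u, unfolded M_def] H4'[OF v, unfolded M_def] m[unfolded M_def]])
        hence "key u < key v \<or> key v < key u" by auto
        thus "(u, v) \<in> P \<or> (v, u) \<in> P" using m u v unfolding P_def by auto
      next
        assume "(u, v) \<in> P \<or> (v, u) \<in> P"
        thus "{u, v} \<in> star_edges E" using star_iff u v unfolding P_def by (auto simp: insert_commute)
      qed
    qed
    ultimately show ?thesis unfolding comparability_graph_def by blast
  qed
qed

end
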